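(* Let $r\ge1$, $0<\epsilon<1/4$, $c>0$ and $\lambda=(2/3)^{1/(4r)}$. Let $D(u)$, $u\in[0,1]$, be real antisymmetric $2N\times2N$ matrices with $|D_{p,q}(u)|\le c\epsilon r^2\lambda^{|p-q|}$ for all $p,q,u$. Let $\hat U=\mathcal T\exp[i\int_0^1du\,\hat D(u)]$, where $\hat D(u)=\frac i4\sum_{p,q}D_{p,q}(u)c_pc_q$, and expand $\hat U=\sum_E\omega_EE$ over Majorana monomials, with $\omega_E=2^{-N}\mathrm{tr}(E^\dagger\hat U)$. Then for every Majorana monomial $E$ with fermionic weight $w_f$ and qubit weight $w_q$, $$|\omega_E|\le\epsilon^{w_f/4}\lambda^{w_q}e^{yN},\qquad y=\frac{3\sqrt\epsilon\,c\,r^2}{1-\sqrt\lambda}.$$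
   Context: Majorana operators $c_1,\dots,c_{2N}$ are realized on $N$ qubits by the Jordan–Wigner map: $c_{2j-1}=Z_1\cdots Z_{j-1}X_j$ and $c_{2j}=Z_1\cdots Z_{j-1}Y_j$, where $X_j,Y_j,Z_j$ are Pauli operators on qubit $j$. A Majorana monomial is $E=c_{p_1}\cdots c_{p_k}$ with $p_1<\dots<p_k$; there are $4^N$ of them and they form an operator basis. Its fermionic weight is $w_f(E)=k$. Its qubit weight $w_q(E)$ is the number of qubits on which the Pauli operator $E$ (under Jordan–Wigner) acts nontrivially. $\mathcal T\exp[i\int_0^1du\,\hat D(u)]$ denotes $\hat U(1)$, where $\partial_u\hat U(u)=i\hat D(u)\hat U(u)$ and $\hat U(0)=I$. *)

theory Defs
  imports "HOL-Analysis.Analysis" "Jordan_Normal_Form.Schur_Decomposition"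
begin

text \<open>Operators on N qubits are 2^N x 2^N complex matrices. The computational basis
  state with index a < 2^N has qubit j (0-indexed, j < N) in state bit a j.\<close>

text \<open>Single-qubit Pauli matrix entries: 0 = I, 1 = X, 2 = Y, 3 = Z.\<close>
definition pauli1 :: "nat \<Rightarrow> bool \<Rightarrow> bool \<Rightarrow> complex" where
  "pauli1 k x y =
     (if k = 1 then (if x \<noteq> y then 1 else 0)
      else if k = 2 then (if x \<noteq> y then (if x then \<i> else - \<i>) else 0)
      else if k = 3 then (if x = y then (if x then -1 else 1) else 0)
      else (if x = y then 1 else 0))"

definition pauli_string :: "nat \<Rightarrow> (nat \<Rightarrow> nat) \<Rightarrow> complex mat" where
  "pauli_string N P = Matrix.mat (2^N) (2^N)
     (\<lambda>(a, b). \<Prod>j<N. pauli1 (P j) (bit a j) (bit b j))"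

text \<open>Jordan-Wigner Majorana operators c_p, 1 \<le> p \<le> 2N:
  c_{2j-1} = Z_1 ... Z_{j-1} X_j and c_{2j} = Z_1 ... Z_{j-1} Y_j
  (qubits 1..N of the paper are 0..N-1 here).\<close>
definition majorana :: "nat \<Rightarrow> nat \<Rightarrow> complex mat" where
  "majorana N p = pauli_string N
     (\<lambda>j. if j < (p - 1) div 2 then 3
          else if j = (p - 1) div 2 then (if odd p then 1 else 2)
          else 0)"

definition majorana_monomial :: "nat \<Rightarrow> nat set \<Rightarrow> complex mat" where
  "majorana_monomial N S =
     foldr (\<lambda>p M. majorana N p * M) (sorted_list_of_set S) (1\<^sub>m (2^N))"

definition fermionic_weight :: "nat set \<Rightarrow> nat" where
  "fermionic_weight S = card S"

text \<open>An operator M on N qubits acts trivially on qubit j iff M = I_j \<otimes> M' , i.e. its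
  entries are diagonal in bit j and independent of the value of bit j.\<close>
definition acts_trivially_on :: "nat \<Rightarrow> complex mat \<Rightarrow> bool" where
  "acts_trivially_on j M \<longleftrightarrow>
     (\<forall>a < dim_row M. \<forall>b < dim_col M.
        (bit a j \<noteq> bit b j \<longrightarrow> M $$ (a, b) = 0) \<and>
        M $$ (a, b) = M $$ (flip_bit j a, flip_bit j b))"

definition qubit_weight :: "nat \<Rightarrow> complex mat \<Rightarrow> nat" where
  "qubit_weight N M = card {j. j < N \<and> \<not> acts_trivially_on j M}"

definition quad_ham :: "nat \<Rightarrow> (nat \<Rightarrow> nat \<Rightarrow> real) \<Rightarrow> complex mat" where
  "quad_ham N D = Matrix.mat (2^N) (2^N) (\<lambda>(a, b).
     (\<i> / 4) * (\<Sum>p\<in>{1..2*N}. \<Sum>q\<in>{1..2*N}.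
        complex_of_real (D p q) * (majorana N p * majorana N q) $$ (a, b)))"

definition mat_trace :: "complex mat \<Rightarrow> complex" where
  "mat_trace M = (\<Sum>i<dim_row M. M $$ (i, i))"

definition expansion_coeff :: "nat \<Rightarrow> complex mat \<Rightarrow> complex mat \<Rightarrow> complex" where
  "expansion_coeff N E U = mat_trace (mat_adjoint E * U) / 2^N"

text \<open>U solves dU/du = i Dhat(u) U(u) on [0,1] with U(0) = I, so U 1 is the time-ordered
  exponential T exp[i \<integral>_0^1 Dhat(u) du]. Derivatives are taken entrywise.\<close>
definition solves_tord_exp :: "nat \<Rightarrow> (real \<Rightarrow> complex mat) \<Rightarrow> (real \<Rightarrow> complex mat) \<Rightarrow> bool" where
  "solves_tord_exp N H U \<longleftrightarrow>
     (\<forall>u\<in>{0..1}. U u \<in> carrier_mat (2^N) (2^N)) \<and>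
     U 0 = 1\<^sub>m (2^N) \<and>
     (\<forall>u\<in>{0..1}. \<forall>a < 2^N. \<forall>b < 2^N.
        ((\<lambda>t. U t $$ (a, b)) has_vector_derivative (\<i> * (H u * U u) $$ (a, b)))
          (at u within {0..1}))"

end

theory Submission
  imports Defs
begin

lemma nat_lt_exp_nobit: fixes a :: nat assumes "a < 2^N" "N \<le> j" shows "\<not> bit a j"
proof -
  have "a < 2^j" using assms by (meson less_le_trans one_le_numeral power_increasing)
  then show ?thesis by (simp add: bit_iff_odd)
qed

lemma nat_nobit_lt_exp: fixes a :: nat assumes "\<And>j. N \<le> j \<Longrightarrow> \<not> bit a j" shows "a < 2^N"
proof -
  have "take_bit N a = a" by (rule bit_eqI) (metis assms bit_take_bit_iff not_less)
  then show ?thesis by (metis take_bit_nat_less_exp)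
qed

lemma flip_bit_lt: fixes a :: nat assumes "a < 2^N" "j < N" shows "flip_bit j a < 2^N"
  by (rule nat_nobit_lt_exp) (use assms nat_lt_exp_nobit in \<open>auto simp: bit_flip_bit_iff\<close>)

lemma bit_eq_lt: fixes a b :: nat assumes "a < 2^N" "b < 2^N" "\<And>j. j < N \<Longrightarrow> bit a j = bit b j"
  shows "a = b"
  by (rule bit_eqI) (metis assms nat_lt_exp_nobit not_less)

lemma bit_add_exp: fixes c :: nat assumes "c < 2^N"
  shows "bit (2^N + c) j = (j = N \<or> bit c j)"
  using assms nat_lt_exp_nobit[OF assms]
  by (subst bit_disjunctive_add_iff) (auto simp: bit_exp_iff)

lemma sum_bits_prod:
  fixes h :: "nat \<Rightarrow> bool \<Rightarrow> 'a::comm_semiring_1"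
  shows "(\<Sum>c::nat<2^N. \<Prod>j<N. h j (bit c j)) = (\<Prod>j<N. h j False + h j True)"
proof (induction N)
  case 0
  then show ?case by simp
next
  case (Suc N)
  have split: "{..<(2::nat)^Suc N} = {..<2^N} \<union> (\<lambda>c::nat. 2^N + c) ` {..<2^N}"
  proof -
    { fix x :: nat assume "x < 2^Suc N" "\<not> x < 2^N"
      then have "x \<in> (\<lambda>c::nat. 2^N + c) ` {..<2^N}" by (auto intro!: image_eqI[of _ _ "x - 2^N"]) }
    then show ?thesis by auto
  qed
  have disj: "{..<(2::nat)^N} \<inter> (\<lambda>c::nat. 2^N + c) ` {..<2^N} = {}" by auto
  have A: "(\<Sum>c::nat<2^N. \<Prod>j<Suc N. h j (bit c j)) = (\<Sum>c::nat<2^N. \<Prod>j<N. h j (bit c j)) * h N False"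
    by (simp add: sum_distrib_right nat_lt_exp_nobit)
  have B: "(\<Sum>c\<in>(\<lambda>c::nat. 2^N + c) ` {..<2^N}. \<Prod>j<Suc N. h j (bit c j))
       = (\<Sum>c::nat<2^N. \<Prod>j<N. h j (bit c j)) * h N True"
  proof -
    have "(\<Sum>c\<in>(\<lambda>c::nat. 2^N + c) ` {..<2^N}. \<Prod>j<Suc N. h j (bit c j))
        = (\<Sum>c::nat<2^N. \<Prod>j<Suc N. h j (bit (2^N + c) j))"
      by (subst sum.reindex) (auto simp: inj_on_def)
    also have "\<dots> = (\<Sum>c::nat<2^N. (\<Prod>j<N. h j (bit c j)) * h N True)"
      by (rule sum.cong) (auto simp: bit_add_exp intro!: prod.cong)
    finally show ?thesis by (simp add: sum_distrib_right)
  qed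
  have "(\<Sum>c::nat<2^Suc N. \<Prod>j<Suc N. h j (bit c j)) = (\<Sum>c::nat<2^N. \<Prod>j<Suc N. h j (bit c j)) + (\<Sum>c\<in>(\<lambda>c::nat. 2^N + c) ` {..<2^N}. \<Prod>j<Suc N. h j (bit c j))"
    unfolding split by (rule sum.union_disjoint) (use disj in auto)
  also have "\<dots> = (\<Prod>j<Suc N. h j False + h j True)"
    unfolding A B Suc by (simp add: distrib_left)
  finally show ?case .
qed

definition pxor :: "nat \<Rightarrow> nat \<Rightarrow> nat" where
  "pxor k l = (if k = 0 then l else if l = 0 then k else if k = l then 0 else 6 - k - l)"

definition ph :: "nat \<Rightarrow> nat \<Rightarrow> complex" where
  "ph k l = (if (k = 1 \<and> l = 2) \<or> (k = 2 \<and> l = 3) \<or> (k = 3 \<and> l = 1) then \<i>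
             else if (k = 2 \<and> l = 1) \<or> (k = 3 \<and> l = 2) \<or> (k = 1 \<and> l = 3) then - \<i> else 1)"

lemma lt4_cases: "(k::nat) < 4 \<Longrightarrow> k = 0 \<or> k = 1 \<or> k = 2 \<or> k = 3" by arith

lemma pxor_lt4: "k < 4 \<Longrightarrow> l < 4 \<Longrightarrow> pxor k l < 4"
  using lt4_cases[of k] lt4_cases[of l] by (auto simp: pxor_def)

lemma pauli1_mult:
  assumes "k < 4" "l < 4"
  shows "pauli1 k a False * pauli1 l False b + pauli1 k a True * pauli1 l True b
         = ph k l * pauli1 (pxor k l) a b"
  using lt4_cases[OF assms(1)] lt4_cases[OF assms(2)]
  by (cases a; cases b) (auto simp: pauli1_def ph_def pxor_def)

lemma pauli1_cnj: "cnj (pauli1 k x y) = pauli1 k y x"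
  by (auto simp: pauli1_def)

lemma pauli_string_dim[simp]:
  "dim_row (pauli_string N P) = 2^N" "dim_col (pauli_string N P) = 2^N"
  "pauli_string N P \<in> carrier_mat (2^N) (2^N)"
  by (auto simp: pauli_string_def)

lemma pauli_string_index:
  "a < 2^N \<Longrightarrow> b < 2^N \<Longrightarrow> pauli_string N P $$ (a, b) = (\<Prod>j<N. pauli1 (P j) (bit a j) (bit b j))"
  by (simp add: pauli_string_def)

lemma mult_entry:
  assumes "dim_col A = n" "dim_row B = n" "i < dim_row A" "j < dim_col B"
  shows "(A * B) $$ (i, j) = (\<Sum>k<n. A $$ (i, k) * B $$ (k, j))"
  using assms by (simp add: scalar_prod_def atLeast0LessThan)

lemma pauli_mult:
  assumes "\<forall>j<N. P j < 4" "\<forall>j<N. Q j < 4"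
  shows "pauli_string N P * pauli_string N Q
       = (\<Prod>j<N. ph (P j) (Q j)) \<cdot>\<^sub>m pauli_string N (\<lambda>j. pxor (P j) (Q j))"
proof (rule eq_matI)
  fix a b assume ab: "a < dim_row ((\<Prod>j<N. ph (P j) (Q j)) \<cdot>\<^sub>m pauli_string N (\<lambda>j. pxor (P j) (Q j)))"
    "b < dim_col ((\<Prod>j<N. ph (P j) (Q j)) \<cdot>\<^sub>m pauli_string N (\<lambda>j. pxor (P j) (Q j)))"
  then have a: "a < 2^N" and b: "b < 2^N" by auto
  have "(pauli_string N P * pauli_string N Q) $$ (a, b)
      = (\<Sum>c::nat<2^N. \<Prod>j<N. pauli1 (P j) (bit a j) (bit c j) * pauli1 (Q j) (bit c j) (bit b j))"
    using a b by (subst mult_entry[of _ "2^N"]) (simp_all add: pauli_string_index prod.distrib)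
  also have "\<dots> = (\<Prod>j<N. pauli1 (P j) (bit a j) False * pauli1 (Q j) False (bit b j)
                     + pauli1 (P j) (bit a j) True * pauli1 (Q j) True (bit b j))"
    by (rule sum_bits_prod)
  also have "\<dots> = (\<Prod>j<N. ph (P j) (Q j) * pauli1 (pxor (P j) (Q j)) (bit a j) (bit b j))"
    by (rule prod.cong) (use assms pauli1_mult in auto)
  also have "\<dots> = ((\<Prod>j<N. ph (P j) (Q j)) \<cdot>\<^sub>m pauli_string N (\<lambda>j. pxor (P j) (Q j))) $$ (a, b)"
    using a b by (simp add: pauli_string_index prod.distrib)
  finally show "(pauli_string N P * pauli_string N Q) $$ (a, b) = \<dots>" .
qed auto

lemma pauli_trace:
  "mat_trace (pauli_string N Q) = (\<Prod>j<N. pauli1 (Q j) False False + pauli1 (Q j) True True)"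
proof -
  have "mat_trace (pauli_string N Q) = (\<Sum>c::nat<2^N. \<Prod>j<N. pauli1 (Q j) (bit c j) (bit c j))"
    by (simp add: mat_trace_def pauli_string_index)
  also have "\<dots> = (\<Prod>j<N. pauli1 (Q j) False False + pauli1 (Q j) True True)"
    by (rule sum_bits_prod)
  finally show ?thesis .
qed

lemma pauli_trace_zero:
  assumes "j < N" "Q j \<in> {1,2,3}"
  shows "mat_trace (pauli_string N Q) = 0"
  unfolding pauli_trace using assms
  by (intro prod_zero bexI[of _ j]) (auto simp: pauli1_def)

lemma pauli_zero_one:
  assumes "\<forall>j<N. Q j = 0"
  shows "pauli_string N Q = 1\<^sub>m (2^N)"
proof (rule eq_matI)
  fix a b assume "a < dim_row (1\<^sub>m (2^N) :: complex mat)" "b < dim_col (1\<^sub>m (2^N) :: complex mat)"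
  then have a: "a < 2^N" and b: "b < 2^N" by auto
  show "pauli_string N Q $$ (a, b) = 1\<^sub>m (2^N) $$ (a, b)"
  proof (cases "a = b")
    case True then show ?thesis using a b assms by (simp add: pauli_string_index pauli1_def)
  next
    case False
    then obtain j where j: "j < N" "bit a j \<noteq> bit b j" using bit_eq_lt[OF a b] by blast
    then show ?thesis using a b assms False
      by (simp add: pauli_string_index) (intro prod_zero bexI[of _ j], auto simp: pauli1_def)
  qed
qed auto

lemma adj_dim[simp]: fixes A :: "complex mat" shows "dim_row (mat_adjoint A) = dim_col A" "dim_col (mat_adjoint A) = dim_row A"
  by (auto simp: mat_adjoint_def)

lemma adj_index: fixes A :: "complex mat" shows "i < dim_col A \<Longrightarrow> j < dim_row A \<Longrightarrow> mat_adjoint A $$ (i, j) = cnj (A $$ (j, i))"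
  by (simp add: mat_adjoint_def mat_of_rows_index)

lemma adj_mult:
  fixes A B :: "complex mat"
  assumes "dim_col A = dim_row B"
  shows "mat_adjoint (A * B) = mat_adjoint B * mat_adjoint A"
proof (rule eq_matI)
  fix i j assume ij: "i < dim_row (mat_adjoint B * mat_adjoint A)" "j < dim_col (mat_adjoint B * mat_adjoint A)"
  then have i: "i < dim_col B" and j: "j < dim_row A" by auto
  have "mat_adjoint (A * B) $$ (i, j) = cnj ((A * B) $$ (j, i))" using i j by (simp add: adj_index)
  also have "\<dots> = cnj (\<Sum>k<dim_row B. A $$ (j, k) * B $$ (k, i))"
    using i j assms by (subst mult_entry[of _ "dim_row B"]) auto
  also have "\<dots> = (\<Sum>k<dim_row B. mat_adjoint B $$ (i, k) * mat_adjoint A $$ (k, j))"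
    using i j assms by (auto simp: adj_index mult.commute intro: sum.cong)
  also have "\<dots> = (mat_adjoint B * mat_adjoint A) $$ (i, j)"
    using i j assms by (subst mult_entry[of _ "dim_row B"]) auto
  finally show "mat_adjoint (A * B) $$ (i, j) = (mat_adjoint B * mat_adjoint A) $$ (i, j)" .
qed auto

lemma adj_smult: fixes A :: "complex mat" shows "mat_adjoint (a \<cdot>\<^sub>m A) = cnj a \<cdot>\<^sub>m mat_adjoint A"
  by (rule eq_matI) (auto simp: adj_index)

lemma adj_pauli: "mat_adjoint (pauli_string N P) = pauli_string N P"
  by (rule eq_matI) (auto simp: adj_index pauli_string_index pauli1_cnj)

definition mcode :: "nat \<Rightarrow> nat \<Rightarrow> nat" where
  "mcode p j = (if j < (p - 1) div 2 then 3
          else if j = (p - 1) div 2 then (if odd p then 1 else 2) else 0)"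

lemma majorana_pauli: "majorana N p = pauli_string N (mcode p)"
  unfolding majorana_def mcode_def by (intro arg_cong[where f="pauli_string N"] ext) simp

lemma mcode_lt4: "mcode p j < 4" by (simp add: mcode_def)

lemma majorana_dim[simp]: "majorana N p \<in> carrier_mat (2^N) (2^N)"
  "dim_row (majorana N p) = 2^N" "dim_col (majorana N p) = 2^N"
  by (auto simp: majorana_pauli)

lemma ph_diag: "ph k k = 1" by (auto simp: ph_def)

lemma pxor_self: "pxor k k = 0" by (simp add: pxor_def)

lemma pxor_comm: "pxor k l = pxor l k" by (simp add: pxor_def add.commute)

lemma smult_smult_mat: "(a::'a::comm_semiring_1) \<cdot>\<^sub>m (b \<cdot>\<^sub>m A) = (a * b) \<cdot>\<^sub>m A"
  by (rule eq_matI) (auto simp: mult.assoc)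

lemma one_smult_mat[simp]: "(1::'a::semiring_1) \<cdot>\<^sub>m A = A"
  by (rule eq_matI) auto

lemma majorana_sq: "majorana N p * majorana N p = 1\<^sub>m (2^N)"
  by (simp add: majorana_pauli pauli_mult mcode_lt4 ph_diag pxor_self pauli_zero_one)

lemma ph_swap:
  "ph k l = (if k \<in> {1,2,3} \<and> l \<in> {1,2,3} \<and> k \<noteq> l then - ph l k else ph l k)"
proof (cases "k \<in> {1,2,3} \<and> l \<in> {1,2,3}")
  case True
  then consider "k = 1" | "k = 2" | "k = 3" by auto
  then show ?thesis using True by cases (auto simp: ph_def)
next
  case False
  then have "ph k l = 1" "ph l k = 1" unfolding ph_def by auto
  moreover have nc: "\<not> (k \<in> {1,2,3} \<and> l \<in> {1,2,3} \<and> k \<noteq> l)" using False by blast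
  ultimately show ?thesis by (subst if_not_P[OF nc]) simp
qed

lemma mcode_clash:
  assumes "p \<noteq> q" "1 \<le> p" "1 \<le> q"
  shows "(mcode p j \<in> {1,2,3} \<and> mcode q j \<in> {1,2,3} \<and> mcode p j \<noteq> mcode q j)
         \<longleftrightarrow> j = min ((p - 1) div 2) ((q - 1) div 2)"
proof -
  have par: "(p - 1) div 2 = (q - 1) div 2 \<Longrightarrow> odd p \<noteq> odd q" using assms by presburger
  show ?thesis using par by (auto simp: mcode_def min_def split: if_splits)
qed

lemma majorana_anticomm:
  assumes "p \<noteq> q" "1 \<le> p" "1 \<le> q" "p \<le> 2*N" "q \<le> 2*N"
  shows "majorana N p * majorana N q = (-1) \<cdot>\<^sub>m (majorana N q * majorana N p)"
proof -
  define j0 where "j0 = min ((p - 1) div 2) ((q - 1) div 2)"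
  have j0: "j0 < N" using assms unfolding j0_def by (auto simp: min_def)
  have "(\<Prod>j<N. ph (mcode p j) (mcode q j)) = ph (mcode p j0) (mcode q j0) * (\<Prod>j\<in>{..<N} - {j0}. ph (mcode p j) (mcode q j))"
    using j0 by (subst prod.remove[of _ j0]) auto
  also have "\<dots> = (- ph (mcode q j0) (mcode p j0)) * (\<Prod>j\<in>{..<N} - {j0}. ph (mcode q j) (mcode p j))"
  proof -
    have "ph (mcode p j0) (mcode q j0) = - ph (mcode q j0) (mcode p j0)"
      using mcode_clash[OF assms(1-3), of j0] unfolding j0_def by (subst ph_swap) auto
    moreover have "(\<Prod>j\<in>{..<N} - {j0}. ph (mcode p j) (mcode q j)) = (\<Prod>j\<in>{..<N} - {j0}. ph (mcode q j) (mcode p j))"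
    proof (rule prod.cong)
      fix j assume "j \<in> {..<N} - {j0}"
      then show "ph (mcode p j) (mcode q j) = ph (mcode q j) (mcode p j)"
        using mcode_clash[OF assms(1-3), of j] unfolding j0_def by (subst ph_swap) auto
    qed simp
    ultimately show ?thesis by simp
  qed
  also have "\<dots> = - (\<Prod>j<N. ph (mcode q j) (mcode p j))"
    using j0 by (subst (2) prod.remove[of _ j0]) auto
  finally have *: "(\<Prod>j<N. ph (mcode p j) (mcode q j)) = - (\<Prod>j<N. ph (mcode q j) (mcode p j))" .
  show ?thesis
    by (simp add: majorana_pauli pauli_mult mcode_lt4 * pxor_comm[of "mcode p _"] smult_smult_mat)
qed

definition sd :: "nat set \<Rightarrow> nat \<Rightarrow> nat set" where
  "sd S p = (if p \<in> S then S - {p} else insert p S)"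

lemma mono_carrier[simp]: "majorana_monomial N S \<in> carrier_mat (2^N) (2^N)"
proof -
  have "\<And>xs. foldr (\<lambda>p M. majorana N p * M) xs (1\<^sub>m (2^N)) \<in> carrier_mat (2^N) (2^N)"
    subgoal for xs by (induction xs) auto done
  then show ?thesis by (simp add: majorana_monomial_def)
qed

lemma mono_dim[simp]: "dim_row (majorana_monomial N S) = 2^N" "dim_col (majorana_monomial N S) = 2^N"
  using carrier_matD[OF mono_carrier[of N S]] by auto

lemma mono_empty: "majorana_monomial N {} = 1\<^sub>m (2^N)"
  by (simp add: majorana_monomial_def)

lemma mono_insert_min:
  assumes "finite T" "\<forall>x\<in>T. m < x"
  shows "majorana_monomial N (insert m T) = majorana N m * majorana_monomial N T"
proof -
  have mT: "m \<notin> T" using assms by auto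
  have "Min (insert m T) = m" using assms by (auto intro!: Min_eqI)
  moreover have "insert m T - {m} = T" using mT by auto
  ultimately have "sorted_list_of_set (insert m T) = m # sorted_list_of_set T"
    using sorted_list_of_set_nonempty[of "insert m T"] assms by auto
  then show ?thesis by (simp add: majorana_monomial_def)
qed

lemma mono_mult:
  assumes "S \<subseteq> {1..2*N}" "p \<in> {1..2*N}"
  shows "\<exists>s::complex. (s = 1 \<or> s = -1) \<and>
           majorana N p * majorana_monomial N S = s \<cdot>\<^sub>m majorana_monomial N (sd S p)"
  using assms
proof (induction "card S" arbitrary: S rule: less_induct)
  case less
  have finS: "finite S" using less.prems finite_subset by blast
  show ?case
  proof (cases "S = {}")
    case True
    then have "majorana_monomial N (sd S p) = majorana N p * majorana_monomial N S"
      using mono_insert_min[of "{}" p N] by (simp add: sd_def mono_empty)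
    then show ?thesis by (intro exI[of _ 1]) simp
  next
    case False
    define m where "m = Min S"
    define S' where "S' = S - {m}"
    have mS: "m \<in> S" using False finS m_def by auto
    have S'm: "\<forall>x\<in>S'. m < x"
    proof
      fix x assume "x \<in> S'"
      then have "x \<in> S" "x \<noteq> m" using S'_def by auto
      moreover have "m \<le> x" using Min_le finS m_def \<open>x \<in> S\<close> by blast
      ultimately show "m < x" by simp
    qed
    have SS': "S = insert m S'" using mS S'_def by auto
    have finS': "finite S'" using finS S'_def by auto
    have ES: "majorana_monomial N S = majorana N m * majorana_monomial N S'"
      using SS' mono_insert_min[OF finS' S'm] by simp
    have card: "card S' < card S" using mS finS S'_def by (metis card_Diff1_less)
    have S'I: "S' \<subseteq> {1..2*N}" using less.prems S'_def by auto
    have mI: "m \<in> {1..2*N}" using less.prems mS by auto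
    consider "p < m" | "p = m" | "m < p" by arith
    then show ?thesis
    proof cases
      case 1
      then have "\<forall>x\<in>S. p < x" using S'm SS' by auto
      then have "majorana_monomial N (sd S p) = majorana N p * majorana_monomial N S"
        using mono_insert_min[OF finS, of p N] by (auto simp: sd_def)
      then show ?thesis by (intro exI[of _ 1]) simp
    next
      case 2
      have "sd S p = S'" using 2 mS S'_def by (simp add: sd_def)
      moreover have "majorana N p * majorana_monomial N S = majorana_monomial N S'"
        unfolding ES 2
        by (subst assoc_mult_mat[symmetric, of _ "2^N" "2^N" _ "2^N" _ "2^N"]) (auto simp: majorana_sq)
      ultimately show ?thesis by (intro exI[of _ 1]) simp
    next
      case 3
      obtain s where s: "s = 1 \<or> s = -1"
        "majorana N p * majorana_monomial N S' = s \<cdot>\<^sub>m majorana_monomial N (sd S' p)"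
        using less.hyps[OF card S'I less.prems(2)] by blast
      have sdS: "sd S p = insert m (sd S' p)" using 3 SS' S'_def by (auto simp: sd_def)
      have sdS': "\<forall>x\<in>sd S' p. m < x" using 3 S'm by (auto simp: sd_def)
      have finsd: "finite (sd S' p)" using finS' by (simp add: sd_def)
      have anti: "majorana N p * majorana N m = (-1) \<cdot>\<^sub>m (majorana N m * majorana N p)"
        using 3 less.prems(2) mI by (intro majorana_anticomm) auto
      have "majorana N p * majorana_monomial N S = (majorana N p * majorana N m) * majorana_monomial N S'"
        unfolding ES by (subst assoc_mult_mat[of _ "2^N" "2^N" _ "2^N" _ "2^N"]) auto
      also have "\<dots> = (-1) \<cdot>\<^sub>m ((majorana N m * majorana N p) * majorana_monomial N S')"
        unfolding anti by (subst mult_smult_assoc_mat[of _ "2^N" "2^N"]) auto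
      also have "\<dots> = (-1) \<cdot>\<^sub>m (majorana N m * (s \<cdot>\<^sub>m majorana_monomial N (sd S' p)))"
        by (subst assoc_mult_mat[of _ "2^N" "2^N" _ "2^N" _ "2^N"]) (auto simp: s(2))
      also have "\<dots> = (- s) \<cdot>\<^sub>m majorana_monomial N (sd S p)"
        unfolding sdS mono_insert_min[OF finsd sdS']
        by (subst mult_smult_distrib[of _ "2^N" "2^N"]) (auto simp: smult_smult_mat)
      finally show ?thesis using s(1) by (intro exI[of _ "-s"]) auto
    qed
  qed
qed

definition Qs :: "nat list \<Rightarrow> nat \<Rightarrow> nat" where
  "Qs xs j = foldr (\<lambda>p acc. pxor (mcode p j) acc) xs 0"

lemma Qs_lt4: "Qs xs j < 4"
  by (induction xs) (auto simp: Qs_def pxor_lt4 mcode_lt4)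

lemma smult_trace: assumes "dim_row A = dim_col A" shows "mat_trace (a \<cdot>\<^sub>m A) = a * mat_trace A"
  unfolding mat_trace_def sum_distrib_left using assms by (intro sum.cong) auto

lemma foldr_pauli:
  "\<exists>\<mu>. foldr (\<lambda>p M. majorana N p * M) xs (1\<^sub>m (2^N)) = \<mu> \<cdot>\<^sub>m pauli_string N (Qs xs)"
proof (induction xs)
  case Nil
  then show ?case by (intro exI[of _ 1]) (simp add: Qs_def pauli_zero_one)
next
  case (Cons p xs)
  then obtain \<mu> where mu: "foldr (\<lambda>p M. majorana N p * M) xs (1\<^sub>m (2^N)) = \<mu> \<cdot>\<^sub>m pauli_string N (Qs xs)" by blast
  have "foldr (\<lambda>p M. majorana N p * M) (p # xs) (1\<^sub>m (2^N)) = majorana N p * (\<mu> \<cdot>\<^sub>m pauli_string N (Qs xs))"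
    by (simp add: mu)
  also have "\<dots> = \<mu> \<cdot>\<^sub>m (majorana N p * pauli_string N (Qs xs))"
    by (rule mult_smult_distrib[of _ "2^N" "2^N"]) auto
  also have "\<dots> = (\<mu> * (\<Prod>j<N. ph (mcode p j) (Qs xs j))) \<cdot>\<^sub>m pauli_string N (Qs (p # xs))"
  proof -
    have "pauli_string N (mcode p) * pauli_string N (Qs xs) = (\<Prod>j<N. ph (mcode p j) (Qs xs j)) \<cdot>\<^sub>m pauli_string N (\<lambda>j. pxor (mcode p j) (Qs xs j))"
      by (rule pauli_mult) (auto simp: mcode_lt4 Qs_lt4)
    moreover have "(\<lambda>j. pxor (mcode p j) (Qs xs j)) = Qs (p # xs)" by (auto simp: Qs_def)
    ultimately show ?thesis by (simp add: majorana_pauli smult_smult_mat)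
  qed
  finally show ?case by blast
qed

lemma Qs_top:
  assumes "distinct xs" "\<forall>p\<in>set xs. 1 \<le> p \<and> (p - 1) div 2 \<le> j"
  shows "Qs xs j = pxor (if 2*j+1 \<in> set xs then 1 else 0) (if 2*j+2 \<in> set xs then 2 else 0)"
  using assms
proof (induction xs)
  case Nil
  then show ?case by (simp add: Qs_def pxor_def)
next
  case (Cons p xs)
  have IH: "Qs xs j = pxor (if 2*j+1 \<in> set xs then 1 else 0) (if 2*j+2 \<in> set xs then 2 else 0)"
    using Cons by auto
  have pxs: "p \<notin> set xs" using Cons.prems by auto
  have p1: "1 \<le> p" "(p - 1) div 2 \<le> j" using Cons.prems by auto
  have Qp: "Qs (p # xs) j = pxor (mcode p j) (Qs xs j)" by (simp add: Qs_def)
  consider "(p - 1) div 2 < j" | "p = 2*j+1" | "p = 2*j+2" using p1 by linarith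
  then show ?case
  proof cases
    case 1
    then have "mcode p j = 0" "p \<noteq> 2*j+1" "p \<noteq> 2*j+2" by (auto simp: mcode_def)
    then show ?thesis using Qp IH by (simp add: pxor_def)
  next
    case 2
    then have "mcode p j = 1" by (simp add: mcode_def)
    then show ?thesis using Qp IH 2 pxs by (auto simp: pxor_def)
  next
    case 3
    then have "mcode p j = 2" by (simp add: mcode_def)
    then show ?thesis using Qp IH 3 pxs by (auto simp: pxor_def)
  qed
qed

lemma mono_trace_zero:
  assumes "S \<subseteq> {1..2*N}" "S \<noteq> {}"
  shows "mat_trace (majorana_monomial N S) = 0"
proof -
  have finS: "finite S" using assms finite_subset by blast
  define xs where "xs = sorted_list_of_set S"
  define M where "M = Max S"
  define j where "j = (M - 1) div 2"
  have MS: "M \<in> S" using finS assms M_def by auto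
  have M1: "1 \<le> M" "M \<le> 2*N" using MS assms by auto
  have jN: "j < N" using M1 j_def by auto
  have setxs: "set xs = S" "distinct xs" using finS xs_def by auto
  have all: "\<forall>p\<in>set xs. 1 \<le> p \<and> (p - 1) div 2 \<le> j"
  proof
    fix p assume "p \<in> set xs"
    then have "p \<in> S" using setxs by auto
    then have "1 \<le> p" "p \<le> M" using assms finS M_def by auto
    then show "1 \<le> p \<and> (p - 1) div 2 \<le> j" unfolding j_def by (simp add: div_le_mono)
  qed
  have Mj: "M = 2*j+1 \<or> M = 2*j+2" using M1 j_def by auto
  have "Qs xs j \<in> {1,2,3}"
    using Qs_top[OF setxs(2) all] Mj MS setxs(1) by (auto simp: pxor_def)
  then have tz: "mat_trace (pauli_string N (Qs xs)) = 0" by (rule pauli_trace_zero[OF jN])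
  obtain \<mu> where "foldr (\<lambda>p M. majorana N p * M) xs (1\<^sub>m (2^N)) = \<mu> \<cdot>\<^sub>m pauli_string N (Qs xs)"
    using foldr_pauli by blast
  then show ?thesis by (simp add: majorana_monomial_def xs_def[symmetric] smult_trace tz)
qed

lemma mono_trace_empty: "mat_trace (majorana_monomial N {}) = 2^N"
  by (simp add: mono_empty mat_trace_def)

lemma triv_pauli:
  assumes "j < N" "Q j = 0"
  shows "acts_trivially_on j (pauli_string N Q)"
  unfolding acts_trivially_on_def
proof (intro allI impI conjI)
  fix a b assume a: "a < dim_row (pauli_string N Q)" and b: "b < dim_col (pauli_string N Q)"
  then have a': "a < 2^N" and b': "b < 2^N" by auto
  show "pauli_string N Q $$ (a, b) = 0" if "bit a j \<noteq> bit b j"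
    using a' b' assms that by (auto simp: pauli_string_index pauli1_def intro!: prod_zero bexI[of _ j])
  have fa: "flip_bit j a < 2^N" and fb: "flip_bit j b < 2^N" using a' b' assms flip_bit_lt by auto
  show "pauli_string N Q $$ (a, b) = pauli_string N Q $$ (flip_bit j a, flip_bit j b)"
    using a' b' fa fb assms
    by (auto simp: pauli_string_index bit_flip_bit_iff pauli1_def intro!: prod.cong)
qed

lemma triv_smult:
  assumes "A \<in> carrier_mat (2^N) (2^N)" "j < N" "acts_trivially_on j A"
  shows "acts_trivially_on j (a \<cdot>\<^sub>m A)"
  using assms flip_bit_lt unfolding acts_trivially_on_def by auto

lemma flip_flip: "flip_bit j (flip_bit j (x::nat)) = x"
  by (rule bit_eqI) (auto simp: bit_flip_bit_iff)

lemma triv_mult: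
  assumes A: "A \<in> carrier_mat (2^N) (2^N)" and B: "B \<in> carrier_mat (2^N) (2^N)" and j: "j < N"
    and tA: "acts_trivially_on j A" and tB: "acts_trivially_on j B"
  shows "acts_trivially_on j (A * B)"
  unfolding acts_trivially_on_def
proof (intro allI impI conjI)
  fix a b assume "a < dim_row (A * B)" "b < dim_col (A * B)"
  then have a: "a < 2^N" and b: "b < 2^N" using A B by auto
  have eA: "\<And>x y. x < 2^N \<Longrightarrow> y < 2^N \<Longrightarrow> (bit x j \<noteq> bit y j \<longrightarrow> A $$ (x, y) = 0) \<and> A $$ (x, y) = A $$ (flip_bit j x, flip_bit j y)"
    using tA A unfolding acts_trivially_on_def by auto
  have eB: "\<And>x y. x < 2^N \<Longrightarrow> y < 2^N \<Longrightarrow> (bit x j \<noteq> bit y j \<longrightarrow> B $$ (x, y) = 0) \<and> B $$ (x, y) = B $$ (flip_bit j x, flip_bit j y)"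
    using tB B unfolding acts_trivially_on_def by auto
  have prod: "\<And>x y. x < 2^N \<Longrightarrow> y < 2^N \<Longrightarrow> (A * B) $$ (x, y) = (\<Sum>k<2^N. A $$ (x, k) * B $$ (k, y))"
    using A B by (intro mult_entry) auto
  show "(A * B) $$ (a, b) = 0" if ne: "bit a j \<noteq> bit b j"
  proof -
    have "\<And>k. k < 2^N \<Longrightarrow> A $$ (a, k) * B $$ (k, b) = 0"
    proof -
      fix k assume k: "k < (2::nat)^N"
      show "A $$ (a, k) * B $$ (k, b) = 0"
      proof (cases "bit a j = bit k j")
        case True then show ?thesis using eB[OF k b] ne by simp
      next
        case False then show ?thesis using eA[OF a k] by simp
      qed
    qed
    then show "(A * B) $$ (a, b) = 0" using prod[OF a b] by (auto intro!: sum.neutral)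
  qed
  have fa: "flip_bit j a < 2^N" and fb: "flip_bit j b < 2^N" using a b j flip_bit_lt by auto
  have "(A * B) $$ (flip_bit j a, flip_bit j b) = (\<Sum>k<2^N. A $$ (flip_bit j a, k) * B $$ (k, flip_bit j b))"
    using prod[OF fa fb] .
  also have "\<dots> = (\<Sum>k\<in>flip_bit j ` {..<2^N}. A $$ (flip_bit j a, k) * B $$ (k, flip_bit j b))"
  proof -
    have "flip_bit j ` {..<(2::nat)^N} = {..<2^N}"
    proof
      show "flip_bit j ` {..<(2::nat)^N} \<subseteq> {..<2^N}" using flip_bit_lt j by auto
      show "{..<(2::nat)^N} \<subseteq> flip_bit j ` {..<2^N}"
      proof
        fix x :: nat assume "x \<in> {..<2^N}"
        then show "x \<in> flip_bit j ` {..<2^N}"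
          using flip_bit_lt[of x N j] j by (intro image_eqI[of _ _ "flip_bit j x"]) (auto simp: flip_flip)
      qed
    qed
    then show ?thesis by simp
  qed
  also have "\<dots> = (\<Sum>k<2^N. A $$ (flip_bit j a, flip_bit j k) * B $$ (flip_bit j k, flip_bit j b))"
    by (subst sum.reindex) (auto simp: inj_on_def, metis flip_flip)
  also have "\<dots> = (\<Sum>k<2^N. A $$ (a, k) * B $$ (k, b))"
    using eA eB a b by (intro sum.cong) auto
  also have "\<dots> = (A * B) $$ (a, b)" using prod[OF a b] by simp
  finally show "(A * B) $$ (a, b) = (A * B) $$ (flip_bit j a, flip_bit j b)" by simp
qed

definition sg :: "nat \<Rightarrow> nat \<Rightarrow> nat set \<Rightarrow> nat set" where
  "sg p q S = sd (sd S p) q"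

lemma sd_sd: "sd (sd S p) p = S" by (auto simp: sd_def)
lemma sd_comm: "sd (sd S p) q = sd (sd S q) p" by (auto simp: sd_def)
lemma sg_sg: "sg q p (sg p q S) = S" by (simp add: sg_def sd_sd)
lemma sg_invol: "sg p q (sg p q S) = S" by (metis sg_def sd_comm sd_sd)
lemma sd_sub: "S \<subseteq> {1..2*N} \<Longrightarrow> p \<in> {1..2*N} \<Longrightarrow> sd S p \<subseteq> {1..2*N}" by (auto simp: sd_def)
lemma sg_sub: "S \<subseteq> {1..2*N} \<Longrightarrow> p \<in> {1..2*N} \<Longrightarrow> q \<in> {1..2*N} \<Longrightarrow> sg p q S \<subseteq> {1..2*N}"
  unfolding sg_def by (rule sd_sub) (rule sd_sub, auto)

lemma sd_card: "finite S \<Longrightarrow> card S \<le> card (sd S p) + 1"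
  by (auto simp: sd_def card_insert_if)

lemma sg_card: "finite S \<Longrightarrow> card S \<le> card (sg p q S) + 2"
proof -
  assume f: "finite S"
  have "card S \<le> card (sd S p) + 1" using sd_card[OF f] .
  moreover have "card (sd S p) \<le> card (sg p q S) + 1" unfolding sg_def
    by (rule sd_card) (use f in \<open>simp add: sd_def\<close>)
  ultimately show ?thesis by simp
qed

lemma pair_mult:
  assumes "S \<subseteq> {1..2*N}" "p \<in> {1..2*N}" "q \<in> {1..2*N}"
  shows "\<exists>s::complex. (s = 1 \<or> s = -1) \<and>
           majorana N q * (majorana N p * majorana_monomial N S) = s \<cdot>\<^sub>m majorana_monomial N (sg p q S)"
proof -
  obtain s1 where s1: "s1 = 1 \<or> s1 = -1" "majorana N p * majorana_monomial N S = s1 \<cdot>\<^sub>m majorana_monomial N (sd S p)"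
    using mono_mult[OF assms(1,2)] by blast
  obtain s2 where s2: "s2 = 1 \<or> s2 = -1" "majorana N q * majorana_monomial N (sd S p) = s2 \<cdot>\<^sub>m majorana_monomial N (sg p q S)"
    using mono_mult[OF sd_sub[OF assms(1,2)] assms(3)] unfolding sg_def by blast
  have "majorana N q * (majorana N p * majorana_monomial N S) = s1 \<cdot>\<^sub>m (majorana N q * majorana_monomial N (sd S p))"
    unfolding s1(2) by (rule mult_smult_distrib[of _ "2^N" "2^N"]) auto
  also have "\<dots> = (s1 * s2) \<cdot>\<^sub>m majorana_monomial N (sg p q S)" unfolding s2(2) by (simp add: smult_smult_mat)
  finally show ?thesis using s1(1) s2(1) by (intro exI[of _ "s1 * s2"]) auto
qed

definition gq :: "nat \<Rightarrow> nat \<Rightarrow> nat" where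
  "gq p q = max ((p - 1) div 2) ((q - 1) div 2) - min ((p - 1) div 2) ((q - 1) div 2) + 1"

lemma weight_step:
  assumes S: "S \<subseteq> {1..2*N}" and p: "p \<in> {1..2*N}" and q: "q \<in> {1..2*N}"
  shows "qubit_weight N (majorana_monomial N S) \<le> qubit_weight N (majorana_monomial N (sg p q S)) + gq p q"
proof -
  define T where "T = sg p q S"
  have TI: "T \<subseteq> {1..2*N}" using sg_sub[OF S p q] T_def by simp
  obtain s where s: "s = 1 \<or> s = -1" "majorana N p * (majorana N q * majorana_monomial N T) = s \<cdot>\<^sub>m majorana_monomial N S"
    using pair_mult[OF TI q p] unfolding T_def sg_sg by blast
  have ES: "majorana_monomial N S = s \<cdot>\<^sub>m ((majorana N p * majorana N q) * majorana_monomial N T)"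
  proof -
    have "s \<cdot>\<^sub>m ((majorana N p * majorana N q) * majorana_monomial N T) = s \<cdot>\<^sub>m (s \<cdot>\<^sub>m majorana_monomial N S)"
      by (subst assoc_mult_mat[of _ "2^N" "2^N" _ "2^N" _ "2^N"]) (auto simp: s(2))
    also have "\<dots> = majorana_monomial N S" using s(1) by (auto simp: smult_smult_mat)
    finally show ?thesis by simp
  qed
  define jp where "jp = (p - 1) div 2"
  define jq where "jq = (q - 1) div 2"
  have cpq: "majorana N p * majorana N q = (\<Prod>j<N. ph (mcode p j) (mcode q j)) \<cdot>\<^sub>m pauli_string N (\<lambda>j. pxor (mcode p j) (mcode q j))"
    by (simp add: majorana_pauli pauli_mult mcode_lt4)
  have sub: "{j. j < N \<and> \<not> acts_trivially_on j (majorana_monomial N S)}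
       \<subseteq> {j. j < N \<and> \<not> acts_trivially_on j (majorana_monomial N T)} \<union> {min jp jq..max jp jq}"
  proof
    fix j assume j: "j \<in> {j. j < N \<and> \<not> acts_trivially_on j (majorana_monomial N S)}"
    show "j \<in> {j. j < N \<and> \<not> acts_trivially_on j (majorana_monomial N T)} \<union> {min jp jq..max jp jq}"
    proof (rule ccontr)
      assume "\<not> ?thesis"
      then have tT: "acts_trivially_on j (majorana_monomial N T)" and out: "j < min jp jq \<or> max jp jq < j"
        using j by auto
      have "pxor (mcode p j) (mcode q j) = 0"
      proof (cases "j < min jp jq")
        case True
        then have "mcode p j = 3" "mcode q j = 3" unfolding mcode_def jp_def jq_def by auto
        then show ?thesis by (simp add: pxor_def)
      next
        case False
        then have "max jp jq < j" using out by (simp add: min_def max_def split: if_splits)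
        then have "mcode p j = 0" "mcode q j = 0" unfolding mcode_def jp_def jq_def by auto
        then show ?thesis by (simp add: pxor_def)
      qed
      then have "acts_trivially_on j (pauli_string N (\<lambda>j. pxor (mcode p j) (mcode q j)))"
        using j by (intro triv_pauli) auto
      then have "acts_trivially_on j (majorana N p * majorana N q)"
        unfolding cpq using j by (intro triv_smult[of _ N]) auto
      then have "acts_trivially_on j ((majorana N p * majorana N q) * majorana_monomial N T)"
        using j tT by (rule_tac triv_mult[of _ N]) auto
      then have "acts_trivially_on j (majorana_monomial N S)"
        unfolding ES using j by (intro triv_smult[of _ N]) auto
      then show False using j by simp
    qed
  qed
  have "qubit_weight N (majorana_monomial N S)
      \<le> card ({j. j < N \<and> \<not> acts_trivially_on j (majorana_monomial N T)} \<union> {min jp jq..max jp jq})"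
    unfolding qubit_weight_def by (rule card_mono[OF _ sub]) auto
  also have "\<dots> \<le> qubit_weight N (majorana_monomial N T) + card {min jp jq..max jp jq}"
    unfolding qubit_weight_def by (rule card_Un_le)
  also have "card {min jp jq..max jp jq} = gq p q" unfolding gq_def jp_def[symmetric] jq_def[symmetric]
    by (simp add: Suc_diff_le)
  finally show ?thesis unfolding T_def .
qed

lemma gronwall_scalar:
  fixes \<Phi> :: "real \<Rightarrow> real"
  assumes cont: "continuous_on {0..1} \<Phi>" and K: "K \<ge> 0"
    and le: "\<And>t. t \<in> {0..1} \<Longrightarrow> \<Phi> t \<le> A + K * integral {0..t} \<Phi>"
  shows "\<Phi> 1 \<le> A * exp K"
proof -
  define G where "G t = integral {0..t} \<Phi>" for t
  have dG: "(G has_real_derivative \<Phi> t) (at t within {0..1})" if "t \<in> {0..1}" for t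
    unfolding G_def by (rule integral_has_real_derivative[OF cont that])
  define F where "F t = exp (- K * t) * (A + K * G t)" for t
  define F' where "F' t = exp (- K * t) * (K * \<Phi> t) + (- K * exp (- K * t)) * (A + K * G t)" for t
  have dF: "(F has_real_derivative F' t) (at t within {0..1})" if "t \<in> {0..1}" for t
    unfolding F_def F'_def
    by (auto intro!: derivative_eq_intros dG[OF that] simp: algebra_simps)
  have "(F' has_integral (F 1 - F 0)) {0..1}"
    by (rule fundamental_theorem_of_calculus) (auto simp: has_real_derivative_iff_has_vector_derivative[symmetric] dF)
  moreover have "F' t \<le> 0" if "t \<in> {0..1}" for t
  proof -
    have "F' t = K * exp (- K * t) * (\<Phi> t - (A + K * G t))" unfolding F'_def by (simp add: algebra_simps)
    moreover have "\<Phi> t - (A + K * G t) \<le> 0" using le[OF that] unfolding G_def by simp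
    ultimately show ?thesis using K by (simp add: mult_nonneg_nonpos)
  qed
  ultimately have "F 1 - F 0 \<le> 0"
    using has_integral_le[of F' "F 1 - F 0" "{0..1}" "\<lambda>_. 0" 0] by auto
  moreover have "F 0 = A" unfolding F_def G_def by simp
  ultimately have "F 1 \<le> A" by simp
  then have "exp (- K) * (A + K * G 1) \<le> A" unfolding F_def by simp
  then have "A + K * G 1 \<le> A * exp K"
    by (simp add: exp_minus field_simps)
  moreover have "\<Phi> 1 \<le> A + K * G 1" using le[of 1] unfolding G_def by simp
  ultimately show ?thesis by simp
qed

lemma gronwall_sys:
  fixes f f' :: "'s \<Rightarrow> real \<Rightarrow> complex" and Ss :: "'s set" and Ks :: "'k set"
    and \<sigma> :: "'k \<Rightarrow> 's \<Rightarrow> 's" and \<alpha> :: "'k \<Rightarrow> real" and w :: "'s \<Rightarrow> real"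
  assumes finS: "finite Ss" and finK: "finite Ks"
    and der: "\<And>S u. S \<in> Ss \<Longrightarrow> u \<in> {0..1} \<Longrightarrow> (f S has_vector_derivative f' S u) (at u within {0..1})"
    and bnd: "\<And>S u. S \<in> Ss \<Longrightarrow> u \<in> {0..1} \<Longrightarrow> cmod (f' S u) \<le> (\<Sum>k\<in>Ks. \<alpha> k * cmod (f (\<sigma> k S) u))"
    and sin: "\<And>k S. k \<in> Ks \<Longrightarrow> S \<in> Ss \<Longrightarrow> \<sigma> k S \<in> Ss"
    and ss: "\<And>k S. k \<in> Ks \<Longrightarrow> S \<in> Ss \<Longrightarrow> \<sigma> k (\<sigma> k S) = S"
    and a0: "\<And>k. k \<in> Ks \<Longrightarrow> \<alpha> k \<ge> 0" and w0: "\<And>S. S \<in> Ss \<Longrightarrow> w S > 0"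
    and col: "\<And>T. T \<in> Ss \<Longrightarrow> (\<Sum>k\<in>Ks. \<alpha> k * (w T / w (\<sigma> k T))) \<le> K"
    and K: "K \<ge> 0"
    and S: "S \<in> Ss"
  shows "cmod (f S 1) \<le> w S * ((\<Sum>T\<in>Ss. cmod (f T 0) / w T) * exp K)"
proof -
  define \<Phi> where "\<Phi> t = (\<Sum>S\<in>Ss. cmod (f S t) / w S)" for t
  define A where "A = \<Phi> 0"
  have contf: "continuous_on {0..1} (f S)" if "S \<in> Ss" for S
    using der[OF that] has_vector_derivative_continuous by (auto simp: continuous_on_eq_continuous_within) blast
  have contP: "continuous_on {0..1} \<Phi>"
    unfolding \<Phi>_def by (intro continuous_intros contf) (use w0 in fastforce)+
  define g where "g S u = (\<Sum>k\<in>Ks. \<alpha> k * cmod (f (\<sigma> k S) u))" for S u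
  have contg: "continuous_on {0..1} (g S)" if "S \<in> Ss" for S
    unfolding g_def by (intro continuous_intros contf sin that) auto
  have step: "cmod (f S t) \<le> cmod (f S 0) + integral {0..t} (g S)" if S: "S \<in> Ss" and t: "t \<in> {0..1}" for S t
  proof -
    have "(f' S has_integral (f S t - f S 0)) {0..t}"
      by (rule fundamental_theorem_of_calculus) (use t in \<open>auto intro: has_vector_derivative_within_subset[OF der[OF S]]\<close>)
    then have i1: "f' S integrable_on {0..t}" and i2: "integral {0..t} (f' S) = f S t - f S 0"
      by (auto simp: integral_unique)
    have i3: "g S integrable_on {0..t}"
      by (rule integrable_continuous_interval) (rule continuous_on_subset[OF contg[OF S]], use t in auto)
    have "norm (integral {0..t} (f' S)) \<le> integral {0..t} (g S)"
      by (rule integral_norm_bound_integral[OF i1 i3]) (use t bnd S in \<open>auto simp: g_def\<close>)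
    then have "cmod (f S t - f S 0) \<le> integral {0..t} (g S)" using i2 by simp
    then show ?thesis using norm_triangle_ineq2[of "f S t" "f S 0"] by simp
  qed
  have pw: "(\<Sum>S\<in>Ss. g S u / w S) \<le> K * \<Phi> u" for u
  proof -
    have "(\<Sum>S\<in>Ss. g S u / w S) = (\<Sum>k\<in>Ks. \<Sum>S\<in>Ss. \<alpha> k * cmod (f (\<sigma> k S) u) / w S)"
      unfolding g_def by (simp add: sum_divide_distrib sum.swap[of _ Ss])
    also have "\<dots> = (\<Sum>k\<in>Ks. \<Sum>T\<in>Ss. \<alpha> k * cmod (f T u) / w (\<sigma> k T))"
    proof (rule sum.cong[OF refl])
      fix k assume k: "k \<in> Ks"
      show "(\<Sum>S\<in>Ss. \<alpha> k * cmod (f (\<sigma> k S) u) / w S) = (\<Sum>T\<in>Ss. \<alpha> k * cmod (f T u) / w (\<sigma> k T))"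
        by (rule sum.reindex_bij_witness[of _ "\<sigma> k" "\<sigma> k"]) (use k sin ss in auto)
    qed
    also have "\<dots> = (\<Sum>T\<in>Ss. (cmod (f T u) / w T) * (\<Sum>k\<in>Ks. \<alpha> k * (w T / w (\<sigma> k T))))"
      unfolding sum.swap[of _ Ks] sum_distrib_left
    proof (intro sum.cong refl)
      fix T k assume T: "T \<in> Ss"
      have "w T > 0" using w0[OF T] .
      then show "\<alpha> k * cmod (f T u) / w (\<sigma> k T) = cmod (f T u) / w T * (\<alpha> k * (w T / w (\<sigma> k T)))"
        by (simp add: field_simps)
    qed
    also have "\<dots> \<le> (\<Sum>T\<in>Ss. (cmod (f T u) / w T) * K)"
      by (intro sum_mono mult_left_mono col) (auto intro!: divide_nonneg_pos w0)
    also have "\<dots> = K * \<Phi> u" unfolding \<Phi>_def by (simp add: sum_distrib_left mult.commute)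
    finally show ?thesis .
  qed
  have le: "\<Phi> t \<le> A + K * integral {0..t} \<Phi>" if t: "t \<in> {0..1}" for t
  proof -
    have ig: "g S integrable_on {0..t}" if "S \<in> Ss" for S
      by (rule integrable_continuous_interval) (rule continuous_on_subset[OF contg[OF that]], use t in auto)
    have "\<Phi> t \<le> (\<Sum>S\<in>Ss. (cmod (f S 0) + integral {0..t} (g S)) / w S)"
      unfolding \<Phi>_def by (intro sum_mono divide_right_mono step t) (auto intro: less_imp_le w0)
    also have "\<dots> = A + (\<Sum>S\<in>Ss. integral {0..t} (\<lambda>u. g S u / w S))"
      unfolding A_def \<Phi>_def by (simp add: add_divide_distrib sum.distrib)
    also have "(\<Sum>S\<in>Ss. integral {0..t} (\<lambda>u. g S u / w S)) = integral {0..t} (\<lambda>u. \<Sum>S\<in>Ss. g S u / w S)"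
      by (rule Henstock_Kurzweil_Integration.integral_sum[symmetric]) (auto intro: finS integrable_on_divide ig)
    also have "\<dots> \<le> integral {0..t} (\<lambda>u. K * \<Phi> u)"
    proof (rule integral_le)
      show "(\<lambda>u. \<Sum>S\<in>Ss. g S u / w S) integrable_on {0..t}"
        by (rule Henstock_Kurzweil_Integration.integrable_sum[OF finS]) (rule integrable_on_divide, rule ig)
      have "continuous_on {0..t} \<Phi>" by (rule continuous_on_subset[OF contP]) (use t in auto)
      then show "(\<lambda>u. K * \<Phi> u) integrable_on {0..t}"
        by (intro integrable_continuous_interval continuous_intros)
    qed (rule pw)
    also have "\<dots> = K * integral {0..t} \<Phi>" by simp
    finally show ?thesis by simp
  qed
  have "\<Phi> 1 \<le> A * exp K" by (rule gronwall_scalar[OF contP K le])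
  moreover have "cmod (f S 1) / w S \<le> \<Phi> 1"
    unfolding \<Phi>_def by (rule member_le_sum[OF S]) (auto intro!: divide_nonneg_pos w0 finS)
  ultimately have "cmod (f S 1) / w S \<le> A * exp K" by simp
  then show ?thesis using w0[OF S] unfolding A_def \<Phi>_def by (simp add: field_simps)
qed

lemma swap4: "(\<Sum>k\<in>K. \<Sum>l\<in>L. \<Sum>p\<in>P. \<Sum>q\<in>Q. F p q k l) = (\<Sum>p\<in>P. \<Sum>q\<in>Q. \<Sum>k\<in>K. \<Sum>l\<in>L. (F p q k l :: complex))"
proof -
  have "(\<Sum>k\<in>K. \<Sum>l\<in>L. \<Sum>p\<in>P. \<Sum>q\<in>Q. F p q k l) = (\<Sum>k\<in>K. \<Sum>p\<in>P. \<Sum>l\<in>L. \<Sum>q\<in>Q. F p q k l)"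
    by (rule sum.cong[OF refl], rule sum.swap)
  also have "\<dots> = (\<Sum>p\<in>P. \<Sum>k\<in>K. \<Sum>l\<in>L. \<Sum>q\<in>Q. F p q k l)" by (rule sum.swap)
  also have "\<dots> = (\<Sum>p\<in>P. \<Sum>k\<in>K. \<Sum>q\<in>Q. \<Sum>l\<in>L. F p q k l)"
    by (intro sum.cong refl sum.swap)
  also have "\<dots> = (\<Sum>p\<in>P. \<Sum>q\<in>Q. \<Sum>k\<in>K. \<Sum>l\<in>L. F p q k l)"
    by (intro sum.cong refl sum.swap)
  finally show ?thesis .
qed

lemma trace_lin:
  fixes A B V :: "complex mat"
  assumes "A \<in> carrier_mat n n" "B \<in> carrier_mat n n" "V \<in> carrier_mat n n"
  shows "mat_trace (A * (B * V)) = (\<Sum>k<n. \<Sum>l<n. B $$ (k, l) * (\<Sum>i<n. A $$ (i, k) * V $$ (l, i)))"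
proof -
  have "mat_trace (A * (B * V)) = (\<Sum>i<n. \<Sum>k<n. A $$ (i, k) * (\<Sum>l<n. B $$ (k, l) * V $$ (l, i)))"
  proof -
    have BV: "(B * V) $$ (k, i) = (\<Sum>l<n. B $$ (k, l) * V $$ (l, i))" if "k < n" "i < n" for k i
      using assms that by (intro mult_entry) auto
    have ABV: "(A * (B * V)) $$ (i, i) = (\<Sum>k<n. A $$ (i, k) * (B * V) $$ (k, i))" if "i < n" for i
      using assms that by (intro mult_entry) auto
    show ?thesis unfolding mat_trace_def
    proof (rule sum.cong)
      show "{..<dim_row (A * (B * V))} = {..<n}" using assms by simp
      fix i assume i: "i \<in> {..<n}"
      show "(A * (B * V)) $$ (i, i) = (\<Sum>k<n. A $$ (i, k) * (\<Sum>l<n. B $$ (k, l) * V $$ (l, i)))"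
        using i by (subst ABV) (auto intro!: sum.cong simp: BV simp del: index_mult_mat)
    qed
  qed
  also have "\<dots> = (\<Sum>i<n. \<Sum>k<n. \<Sum>l<n. B $$ (k, l) * (A $$ (i, k) * V $$ (l, i)))"
    by (simp add: sum_distrib_left mult_ac)
  also have "\<dots> = (\<Sum>k<n. \<Sum>i<n. \<Sum>l<n. B $$ (k, l) * (A $$ (i, k) * V $$ (l, i)))"
    by (rule sum.swap)
  also have "\<dots> = (\<Sum>k<n. \<Sum>l<n. \<Sum>i<n. B $$ (k, l) * (A $$ (i, k) * V $$ (l, i)))"
    by (intro sum.cong refl sum.swap)
  also have "\<dots> = (\<Sum>k<n. \<Sum>l<n. B $$ (k, l) * (\<Sum>i<n. A $$ (i, k) * V $$ (l, i)))"
    by (simp add: sum_distrib_left)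
  finally show ?thesis .
qed

lemma quad_ham_carrier[simp]: "quad_ham N D \<in> carrier_mat (2^N) (2^N)"
  by (simp add: quad_ham_def)

lemma trace_ham:
  fixes A V :: "complex mat"
  assumes A: "A \<in> carrier_mat (2^N) (2^N)" and V: "V \<in> carrier_mat (2^N) (2^N)"
  shows "mat_trace (A * (quad_ham N D * V))
       = (\<i> / 4) * (\<Sum>p\<in>{1..2*N}. \<Sum>q\<in>{1..2*N}. complex_of_real (D p q) * mat_trace (A * ((majorana N p * majorana N q) * V)))"
proof -
  define C where "C k l = (\<Sum>i<2^N. A $$ (i, k) * V $$ (l, i))" for k l
  have "mat_trace (A * (quad_ham N D * V)) = (\<Sum>k<2^N. \<Sum>l<2^N. quad_ham N D $$ (k, l) * C k l)"
    unfolding C_def by (rule trace_lin[OF A _ V]) simp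
  also have "\<dots> = (\<Sum>k<2^N. \<Sum>l<2^N. \<Sum>p\<in>{1..2*N}. \<Sum>q\<in>{1..2*N}.
        (\<i> / 4) * (complex_of_real (D p q) * ((majorana N p * majorana N q) $$ (k, l) * C k l)))"
    by (intro sum.cong refl) (simp add: quad_ham_def sum_distrib_left sum_distrib_right mult_ac)
  also have "\<dots> = (\<Sum>p\<in>{1..2*N}. \<Sum>q\<in>{1..2*N}. \<Sum>k<2^N. \<Sum>l<2^N.
        (\<i> / 4) * (complex_of_real (D p q) * ((majorana N p * majorana N q) $$ (k, l) * C k l)))"
    by (rule swap4)
  also have "\<dots> = (\<i> / 4) * (\<Sum>p\<in>{1..2*N}. \<Sum>q\<in>{1..2*N}. complex_of_real (D p q) *
        (\<Sum>k<2^N. \<Sum>l<2^N. (majorana N p * majorana N q) $$ (k, l) * C k l))"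
    by (simp add: sum_distrib_left)
  also have "\<dots> = (\<i> / 4) * (\<Sum>p\<in>{1..2*N}. \<Sum>q\<in>{1..2*N}. complex_of_real (D p q) * mat_trace (A * ((majorana N p * majorana N q) * V)))"
    unfolding C_def by (subst trace_lin[OF A _ V]) auto
  finally show ?thesis .
qed

lemma adj_majorana: "mat_adjoint (majorana N p) = majorana N p"
  by (simp add: majorana_pauli adj_pauli)

lemma adj_carrier[simp]: "A \<in> carrier_mat n m \<Longrightarrow> mat_adjoint (A :: complex mat) \<in> carrier_mat m n"
  by auto

lemma trace_pair:
  fixes V :: "complex mat"
  assumes S: "S \<subseteq> {1..2*N}" and p: "p \<in> {1..2*N}" and q: "q \<in> {1..2*N}"
    and V: "V \<in> carrier_mat (2^N) (2^N)"
  shows "cmod (mat_trace (mat_adjoint (majorana_monomial N S) * ((majorana N p * majorana N q) * V)))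
       = cmod (mat_trace (mat_adjoint (majorana_monomial N (sg p q S)) * V))"
proof -
  obtain s where s: "s = 1 \<or> s = -1"
    "majorana N q * (majorana N p * majorana_monomial N S) = s \<cdot>\<^sub>m majorana_monomial N (sg p q S)"
    using pair_mult[OF S p q] by blast
  let ?E = "majorana_monomial N S"
  have "mat_adjoint (majorana N q * (majorana N p * ?E)) = mat_adjoint ?E * majorana N p * majorana N q"
    by (simp add: adj_mult adj_majorana)
  also have "\<dots> = mat_adjoint ?E * (majorana N p * majorana N q)"
    by (rule assoc_mult_mat[of _ "2^N" "2^N" _ "2^N" _ "2^N"]) auto
  finally have "mat_adjoint ?E * (majorana N p * majorana N q) = mat_adjoint (majorana N q * (majorana N p * ?E))" by simp
  also have "\<dots> = s \<cdot>\<^sub>m mat_adjoint (majorana_monomial N (sg p q S))"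
    using s by (auto simp: adj_smult)
  finally have e: "mat_adjoint ?E * (majorana N p * majorana N q) = s \<cdot>\<^sub>m mat_adjoint (majorana_monomial N (sg p q S))" .
  have "mat_adjoint ?E * ((majorana N p * majorana N q) * V) = (mat_adjoint ?E * (majorana N p * majorana N q)) * V"
    using V by (subst assoc_mult_mat[of _ "2^N" "2^N" _ "2^N" _ "2^N"]) auto
  also have "\<dots> = s \<cdot>\<^sub>m (mat_adjoint (majorana_monomial N (sg p q S)) * V)"
    unfolding e using V by (subst mult_smult_assoc_mat[of _ "2^N" "2^N"]) auto
  finally have "mat_trace (mat_adjoint ?E * ((majorana N p * majorana N q) * V))
      = s * mat_trace (mat_adjoint (majorana_monomial N (sg p q S)) * V)"
    using V by (simp add: smult_trace)
  then show ?thesis using s(1) by (auto simp: norm_mult)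
qed

lemma geom_finite_le:
  fixes \<mu> :: real assumes "0 \<le> \<mu>" "\<mu> < 1" "finite F"
  shows "(\<Sum>d\<in>F. \<mu> ^ d) \<le> 1 / (1 - \<mu>)"
proof -
  have "summable (\<lambda>n. \<mu> ^ n)" using assms by (intro summable_geometric) simp
  then have "(\<Sum>d\<in>F. \<mu> ^ d) \<le> (\<Sum>n. \<mu> ^ n)" using assms by (intro sum_le_suminf) auto
  also have "\<dots> = 1 / (1 - \<mu>)" using assms by (intro suminf_geometric) simp
  finally show ?thesis .
qed

lemma geom_row:
  fixes \<mu> :: real assumes "0 \<le> \<mu>" "\<mu> < 1"
  shows "(\<Sum>q\<in>{1..M}. \<mu> ^ nat \<bar>int p - int q\<bar>) \<le> 2 / (1 - \<mu>)"
proof -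
  define A where "A = {q \<in> {1..M}. q \<le> p}"
  define B where "B = {q \<in> {1..M}. \<not> q \<le> p}"
  have eq: "{1..M} = A \<union> B" and dj: "A \<inter> B = {}" and fA: "finite A" and fB: "finite B"
    unfolding A_def B_def by auto
  have "(\<Sum>q\<in>{1..M}. \<mu> ^ nat \<bar>int p - int q\<bar>) = (\<Sum>q\<in>A. \<mu> ^ nat \<bar>int p - int q\<bar>) + (\<Sum>q\<in>B. \<mu> ^ nat \<bar>int p - int q\<bar>)"
    unfolding eq by (rule sum.union_disjoint[OF fA fB dj])
  also have "(\<Sum>q\<in>A. \<mu> ^ nat \<bar>int p - int q\<bar>) = (\<Sum>q\<in>A. \<mu> ^ (p - q))"
    by (intro sum.cong refl) (auto simp: A_def nat_diff_distrib)
  also have "\<dots> = (\<Sum>d\<in>(\<lambda>q. p - q) ` A. \<mu> ^ d)"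
    by (subst sum.reindex) (auto simp: inj_on_def A_def)
  also have "(\<Sum>q\<in>B. \<mu> ^ nat \<bar>int p - int q\<bar>) = (\<Sum>q\<in>B. \<mu> ^ (q - p))"
    by (intro sum.cong refl) (auto simp: B_def nat_diff_distrib)
  also have "\<dots> = (\<Sum>d\<in>(\<lambda>q. q - p) ` B. \<mu> ^ d)"
    by (subst sum.reindex) (auto simp: inj_on_def B_def)
  finally have "(\<Sum>q\<in>{1..M}. \<mu> ^ nat \<bar>int p - int q\<bar>) \<le> 1 / (1 - \<mu>) + 1 / (1 - \<mu>)"
    using geom_finite_le[OF assms, of "(\<lambda>q. p - q) ` A"] geom_finite_le[OF assms, of "(\<lambda>q. q - p) ` B"] fA fB
    by simp
  then show ?thesis by simp
qed

lemma gq_aux: "p \<le> q \<Longrightarrow> 2 * (((q::nat) - 1) div 2 - (p - 1) div 2 + 1) \<le> q - p + 3"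
proof -
  assume pq: "p \<le> q"
  have a: "(p - 1) div 2 \<le> (q - 1) div 2" using pq by (simp add: div_le_mono)
  have b: "2 * ((q - 1) div 2) \<le> q - 1" by simp
  have c: "p - 1 \<le> 2 * ((p - 1) div 2) + 1" by simp
  have gen: "\<And>x y::nat. y \<le> x \<Longrightarrow> 2*x \<le> q - 1 \<Longrightarrow> p - 1 \<le> 2*y+1 \<Longrightarrow> 2*(x - y + 1) \<le> q - p + 3"
    using pq by arith
  show ?thesis by (rule gen[OF a b c])
qed

lemma gq_bound: "2 * gq p q \<le> nat \<bar>int p - int q\<bar> + 3"
proof (cases "p \<le> q")
  case True
  then have m: "(p - 1) div 2 \<le> (q - 1) div 2" by (simp add: div_le_mono)
  have g: "gq p q = (q - 1) div 2 - (p - 1) div 2 + 1" unfolding gq_def using m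
    by (simp only: max_absorb2 min_absorb1)
  have n: "nat \<bar>int p - int q\<bar> = q - p" using True by simp
  show ?thesis unfolding g n using gq_aux[OF True] .
next
  case False
  then have F: "q \<le> p" by simp
  then have m: "(q - 1) div 2 \<le> (p - 1) div 2" by (simp add: div_le_mono)
  have g: "gq p q = (p - 1) div 2 - (q - 1) div 2 + 1" unfolding gq_def using m
    by (simp only: max_absorb1 min_absorb2)
  have n: "nat \<bar>int p - int q\<bar> = p - q" using F by simp
  show ?thesis unfolding g n using gq_aux[OF F] .
qed

definition coef :: "nat \<Rightarrow> (real \<Rightarrow> complex mat) \<Rightarrow> nat set \<Rightarrow> real \<Rightarrow> complex" where
  "coef N U S t = (\<Sum>i<2^N. \<Sum>k<2^N. cnj (majorana_monomial N S $$ (k, i)) * U t $$ (k, i)) / 2^N"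

lemma tr_adj:
  assumes V: "V \<in> carrier_mat (2^N) (2^N)"
  shows "mat_trace (mat_adjoint (majorana_monomial N S) * V)
       = (\<Sum>i<2^N. \<Sum>k<2^N. cnj (majorana_monomial N S $$ (k, i)) * V $$ (k, i))"
  unfolding mat_trace_def
proof (rule sum.cong)
  show "{..<dim_row (mat_adjoint (majorana_monomial N S) * V)} = {..<2^N}" by simp
  fix i assume i: "i \<in> {..<(2::nat)^N}"
  have "(mat_adjoint (majorana_monomial N S) * V) $$ (i, i)
      = (\<Sum>k<2^N. mat_adjoint (majorana_monomial N S) $$ (i, k) * V $$ (k, i))"
    using i V by (intro mult_entry) auto
  also have "\<dots> = (\<Sum>k<2^N. cnj (majorana_monomial N S $$ (k, i)) * V $$ (k, i))"
    using i by (intro sum.cong refl) (simp add: adj_index)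
  finally show "(mat_adjoint (majorana_monomial N S) * V) $$ (i, i) = (\<Sum>k<2^N. cnj (majorana_monomial N S $$ (k, i)) * V $$ (k, i))" .
qed

lemma coef_eq:
  assumes "U t \<in> carrier_mat (2^N) (2^N)"
  shows "coef N U S t = expansion_coeff N (majorana_monomial N S) (U t)"
  unfolding coef_def expansion_coeff_def by (simp add: tr_adj[OF assms])

lemma coef_deriv:
  assumes U: "solves_tord_exp N (\<lambda>u. quad_ham N (D u)) U" and u: "u \<in> {0..1}"
  shows "(coef N U S has_vector_derivative
           (\<i> * mat_trace (mat_adjoint (majorana_monomial N S) * (quad_ham N (D u) * U u)) / 2^N))
         (at u within {0..1})"
proof -
  have Uc: "U u \<in> carrier_mat (2^N) (2^N)" using U u unfolding solves_tord_exp_def by auto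
  have dU: "((\<lambda>t. U t $$ (k, i)) has_vector_derivative (\<i> * (quad_ham N (D u) * U u) $$ (k, i))) (at u within {0..1})"
    if "k < 2^N" "i < 2^N" for k i
    using U u that unfolding solves_tord_exp_def by auto
  have "(coef N U S has_vector_derivative
      (\<Sum>i<2^N. \<Sum>k<2^N. cnj (majorana_monomial N S $$ (k, i)) * (\<i> * (quad_ham N (D u) * U u) $$ (k, i))) / 2^N)
      (at u within {0..1})"
    unfolding coef_def[abs_def]
    by (intro has_vector_derivative_divide has_vector_derivative_sum has_vector_derivative_mult_right dU) auto
  moreover have "(\<Sum>i<2^N. \<Sum>k<2^N. cnj (majorana_monomial N S $$ (k, i)) * (\<i> * (quad_ham N (D u) * U u) $$ (k, i)))
      = \<i> * mat_trace (mat_adjoint (majorana_monomial N S) * (quad_ham N (D u) * U u))"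
  proof -
    have HU: "quad_ham N (D u) * U u \<in> carrier_mat (2^N) (2^N)" using Uc by (metis mult_carrier_mat quad_ham_carrier)
    show ?thesis by (subst tr_adj[OF HU]) (auto simp: sum_distrib_left mult_ac)
  qed
  ultimately show ?thesis by simp
qed

lemma coef_bound:
  assumes S: "S \<subseteq> {1..2*N}" and Uc: "U u \<in> carrier_mat (2^N) (2^N)"
  shows "cmod (\<i> * mat_trace (mat_adjoint (majorana_monomial N S) * (quad_ham N (D u) * U u)) / 2^N)
     \<le> (\<Sum>p\<in>{1..2*N}. \<Sum>q\<in>{1..2*N}. \<bar>D u p q\<bar> / 4 * cmod (coef N U (sg p q S) u))"
proof -
  let ?t = "\<lambda>p q. mat_trace (mat_adjoint (majorana_monomial N S) * ((majorana N p * majorana N q) * U u))"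
  have "mat_trace (mat_adjoint (majorana_monomial N S) * (quad_ham N (D u) * U u))
     = (\<i> / 4) * (\<Sum>p\<in>{1..2*N}. \<Sum>q\<in>{1..2*N}. complex_of_real (D u p q) * ?t p q)"
    by (rule trace_ham) (auto simp: Uc)
  note e = this
  have "cmod (\<i> * mat_trace (mat_adjoint (majorana_monomial N S) * (quad_ham N (D u) * U u)) / 2^N)
     = cmod (\<Sum>p\<in>{1..2*N}. \<Sum>q\<in>{1..2*N}. complex_of_real (D u p q) * ?t p q) / 4 / 2^N"
    unfolding e by (simp add: norm_mult norm_divide norm_power)
  also have "\<dots> \<le> (\<Sum>p\<in>{1..2*N}. \<Sum>q\<in>{1..2*N}. cmod (complex_of_real (D u p q) * ?t p q)) / 4 / 2^N"
    by (intro divide_right_mono order.trans[OF norm_sum] sum_mono norm_sum) auto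
  also have "\<dots> = (\<Sum>p\<in>{1..2*N}. \<Sum>q\<in>{1..2*N}. \<bar>D u p q\<bar> / 4 * cmod (coef N U (sg p q S) u))"
  proof -
    have "cmod (complex_of_real (D u p q) * ?t p q) / 4 / 2^N = \<bar>D u p q\<bar> / 4 * cmod (coef N U (sg p q S) u)"
      if p: "p \<in> {1..2*N}" and q: "q \<in> {1..2*N}" for p q
    proof -
      have "cmod (?t p q) = cmod (mat_trace (mat_adjoint (majorana_monomial N (sg p q S)) * U u))"
        by (rule trace_pair[OF S p q Uc])
      also have "\<dots> = cmod (coef N U (sg p q S) u) * 2^N"
        using coef_eq[of U u N "sg p q S", OF Uc] by (simp add: expansion_coeff_def norm_divide norm_power)
      finally show ?thesis by (simp add: norm_mult)
    qed
    note eqpq = this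
    show ?thesis unfolding sum_divide_distrib by (intro sum.cong refl) (use eqpq in auto)
  qed
  finally show ?thesis .
qed

lemma term_bound:
  fixes \<epsilon> mu cc :: real and nT nT' qT qT' g d :: nat
  assumes eps: "0 < \<epsilon>" "\<epsilon> < 1" and mu: "0 < mu" "mu \<le> 1" and cc: "0 \<le> cc"
    and n: "nT' \<le> nT + 2" and q: "qT' \<le> qT + g" and gd: "2 * g \<le> d + 3"
  shows "(cc * \<epsilon> * (mu^2)^d / 4) * ((\<epsilon> powr (real nT / 4) * (mu^2)^qT) / (\<epsilon> powr (real nT' / 4) * (mu^2)^qT'))
         \<le> (sqrt \<epsilon> * cc / 4) * mu^d / mu^3"
proof -
  have e1: "\<epsilon> powr (real nT / 4) / \<epsilon> powr (real nT' / 4) \<le> \<epsilon> powr (-1/2)"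
  proof -
    have "\<epsilon> powr (real nT / 4) / \<epsilon> powr (real nT' / 4) = \<epsilon> powr (real nT / 4 - real nT' / 4)"
      by (simp add: powr_diff)
    also have "\<dots> \<le> \<epsilon> powr (-1/2)"
      by (rule powr_mono') (use n eps in auto)
    finally show ?thesis .
  qed
  have l1: "(mu^2)^qT / (mu^2)^qT' \<le> 1 / mu^(d+3)"
  proof -
    have "(mu^2)^(qT + g) \<le> (mu^2)^qT'"
      by (rule power_decreasing[OF q]) (use mu in \<open>auto simp: power_le_one\<close>)
    then have "(mu^2)^qT * (mu^2)^g \<le> (mu^2)^qT'" by (simp add: power_add)
    moreover have "mu^(d+3) \<le> (mu^2)^g"
      unfolding power_mult[symmetric] by (rule power_decreasing[OF gd]) (use mu in auto)
    ultimately have "(mu^2)^qT * mu^(d+3) \<le> (mu^2)^qT'"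
      by (smt (verit) mu(1) mult_left_mono zero_le_power zero_less_power)
    then show ?thesis using mu by (simp add: field_simps)
  qed
  have pos: "0 < \<epsilon> powr (real nT' / 4) * (mu^2)^qT'" using eps mu by simp
  have "(\<epsilon> powr (real nT / 4) * (mu^2)^qT) / (\<epsilon> powr (real nT' / 4) * (mu^2)^qT')
      = (\<epsilon> powr (real nT / 4) / \<epsilon> powr (real nT' / 4)) * ((mu^2)^qT / (mu^2)^qT')"
    by simp
  also have "\<dots> \<le> \<epsilon> powr (-1/2) * (1 / mu^(d+3))"
    by (intro mult_mono e1 l1) (use eps mu in auto)
  finally have r: "(\<epsilon> powr (real nT / 4) * (mu^2)^qT) / (\<epsilon> powr (real nT' / 4) * (mu^2)^qT') \<le> \<epsilon> powr (-1/2) / mu^(d+3)"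
    by simp
  have sq: "\<epsilon> * \<epsilon> powr (-1/2) = sqrt \<epsilon>"
  proof -
    have "\<epsilon> * \<epsilon> powr (-1/2) = \<epsilon> powr 1 * \<epsilon> powr (-1/2)" using eps by simp
    also have "\<dots> = \<epsilon> powr (1 + (-1/2))" by (rule powr_add[symmetric])
    also have "\<dots> = \<epsilon> powr (1/2)" by simp
    also have "\<dots> = sqrt \<epsilon>" using eps by (simp add: powr_half_sqrt)
    finally show ?thesis .
  qed
  have m2: "(mu^2)^d = mu^d * mu^d" by (simp add: power2_eq_square power_mult_distrib)
  have m3: "mu^(d+3) = mu^d * mu^3" by (simp add: power_add)
  have "(cc * \<epsilon> * (mu^2)^d / 4) * ((\<epsilon> powr (real nT / 4) * (mu^2)^qT) / (\<epsilon> powr (real nT' / 4) * (mu^2)^qT'))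
      \<le> (cc * \<epsilon> * (mu^2)^d / 4) * (\<epsilon> powr (-1/2) / mu^(d+3))"
    by (rule mult_left_mono[OF r]) (use cc eps mu in auto)
  also have "\<dots> = (\<epsilon> * \<epsilon> powr (-1/2)) * cc / 4 * mu^d / mu^3"
    unfolding m2 m3 using mu by (simp add: field_simps)
  also have "\<dots> = (sqrt \<epsilon> * cc / 4) * mu^d / mu^3" unfolding sq by simp
  finally show ?thesis .
qed

lemma lam_facts:
  fixes r :: real assumes r: "r \<ge> 1"
  shows "2/3 \<le> (2/3::real) powr (1/(4*r))" "(2/3::real) powr (1/(4*r)) < 1"
proof -
  have a: "1/(4*r) \<le> 1" "0 < 1/(4*r)" using r by (auto simp: field_simps)
  have "(2/3::real) powr 1 \<le> (2/3) powr (1/(4*r))"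
    by (rule powr_mono') (use a in auto)
  then show "2/3 \<le> (2/3::real) powr (1/(4*r))" by simp
  have "ln (2/3::real) < 0" by (rule ln_less_zero) auto
  moreover have "0 < 4*r" using r by simp
  ultimately have "ln (2/3::real) / (4*r) < 0" by (simp add: divide_neg_pos)
  then show "(2/3::real) powr (1/(4*r)) < 1" by (simp add: powr_def)
qed

lemma adj_trace: "A \<in> carrier_mat n n \<Longrightarrow> mat_trace (mat_adjoint A) = cnj (mat_trace (A :: complex mat))"
  by (auto simp: mat_trace_def adj_index)

lemma qw_one: "qubit_weight N (1\<^sub>m (2^N)) = 0"
proof -
  have "1\<^sub>m (2^N) = pauli_string N (\<lambda>_. 0)" by (rule pauli_zero_one[symmetric]) simp
  then have "{j. j < N \<and> \<not> acts_trivially_on j (1\<^sub>m (2^N))} = {}"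
    using triv_pauli[of _ N "\<lambda>_. 0"] by auto
  then show ?thesis by (simp add: qubit_weight_def)
qed

theorem mainTheorem9:
  fixes N :: nat and r \<epsilon> c :: real
    and D :: "real \<Rightarrow> nat \<Rightarrow> nat \<Rightarrow> real"
    and U :: "real \<Rightarrow> complex mat"
  assumes r: "r \<ge> 1"
    and eps: "0 < \<epsilon>" "\<epsilon> < 1/4"
    and c: "c > 0"
    and antisym: "\<And>u p q. u \<in> {0..1} \<Longrightarrow> p \<in> {1..2*N} \<Longrightarrow> q \<in> {1..2*N} \<Longrightarrow>
                    D u p q = - D u q p"
    and decay: "\<And>u p q. u \<in> {0..1} \<Longrightarrow> p \<in> {1..2*N} \<Longrightarrow> q \<in> {1..2*N} \<Longrightarrow>
                    \<bar>D u p q\<bar> \<le> c * \<epsilon> * r^2 * ((2/3) powr (1 / (4*r))) ^ (nat \<bar>int p - int q\<bar>)"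
    and U: "solves_tord_exp N (\<lambda>u. quad_ham N (D u)) U"
  shows "\<forall>S. S \<subseteq> {1..2*N} \<longrightarrow>
           cmod (expansion_coeff N (majorana_monomial N S) (U 1))
             \<le> \<epsilon> powr (real (fermionic_weight S) / 4)
                * ((2/3) powr (1 / (4*r))) ^ qubit_weight N (majorana_monomial N S)
                * exp (3 * sqrt \<epsilon> * c * r^2 / (1 - sqrt ((2/3) powr (1 / (4*r)))) * real N)"
proof (intro allI impI)
  fix S assume S: "S \<subseteq> {1..2*N}"
  define lam where "lam = (2/3::real) powr (1/(4*r))"
  define mu where "mu = sqrt lam"
  define I where "I = {1..2*N}"
  define w where "w T = \<epsilon> powr (real (card T) / 4) * lam ^ qubit_weight N (majorana_monomial N T)" for T
  define K where "K = 3 * sqrt \<epsilon> * c * r^2 / (1 - sqrt lam) * real N"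
  define \<alpha> where "\<alpha> k = c * \<epsilon> * r^2 * lam ^ (nat \<bar>int (fst k) - int (snd k)\<bar>) / 4" for k :: "nat \<times> nat"
  have lam: "2/3 \<le> lam" "lam < 1" using lam_facts[OF r] unfolding lam_def by auto
  have lam0: "0 < lam" using lam by simp
  have mu: "0 < mu" "mu < 1" "mu^2 = lam" using lam0 lam unfolding mu_def by auto
  have mu45: "4/5 \<le> mu" unfolding mu_def by (rule real_le_rsqrt) (use lam in \<open>simp add: power2_eq_square\<close>)
  have mu3: "1/3 \<le> mu^3"
  proof -
    have "(4/5::real)^3 \<le> mu^3" by (rule power_mono[OF mu45]) simp
    moreover have "(4/5::real)^3 = 64/125" by (simp add: power3_eq_cube)
    ultimately show ?thesis by linarith
  qed
  have Uc: "U u \<in> carrier_mat (2^N) (2^N)" if "u \<in> {0..1}" for u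
    using U that unfolding solves_tord_exp_def by auto
  have Kpos: "0 \<le> K" unfolding K_def using eps c mu unfolding mu_def by (auto intro!: divide_nonneg_pos)
  have w0: "w T > 0" for T unfolding w_def using eps lam0 by simp
  have main: "cmod (coef N U S 1) \<le> w S * ((\<Sum>T\<in>{T. T \<subseteq> I}. cmod (coef N U T 0) / w T) * exp K)"
  proof (rule gronwall_sys[where Ks = "I \<times> I" and \<sigma> = "\<lambda>k. sg (fst k) (snd k)" and \<alpha> = \<alpha>
        and f' = "\<lambda>S u. \<i> * mat_trace (mat_adjoint (majorana_monomial N S) * (quad_ham N (D u) * U u)) / 2^N"])
    show "finite {T. T \<subseteq> I}" unfolding I_def by simp
    show "finite (I \<times> I)" unfolding I_def by simp
    show "S \<in> {T. T \<subseteq> I}" using S unfolding I_def by simp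
    show "0 \<le> K" by (rule Kpos)
    show "0 < w T" for T by (rule w0)
    show "0 \<le> \<alpha> k" for k unfolding \<alpha>_def using c eps lam0 by simp
    show "(coef N U T has_vector_derivative
        \<i> * mat_trace (mat_adjoint (majorana_monomial N T) * (quad_ham N (D u) * U u)) / 2^N) (at u within {0..1})"
      if "u \<in> {0..1}" for T u by (rule coef_deriv[OF U that])
    show "sg (fst k) (snd k) T \<in> {T. T \<subseteq> I}" if "k \<in> I \<times> I" "T \<in> {T. T \<subseteq> I}" for k T
      using that unfolding I_def by (intro CollectI sg_sub) (auto simp: mem_Times_iff)
    show "sg (fst k) (snd k) (sg (fst k) (snd k) T) = T" for k T by (rule sg_invol)
    show "cmod (\<i> * mat_trace (mat_adjoint (majorana_monomial N T) * (quad_ham N (D u) * U u)) / 2^N)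
        \<le> (\<Sum>k\<in>I \<times> I. \<alpha> k * cmod (coef N U (sg (fst k) (snd k) T) u))"
      if T: "T \<in> {T. T \<subseteq> I}" and u: "u \<in> {0..1}" for T u
    proof -
      have "cmod (\<i> * mat_trace (mat_adjoint (majorana_monomial N T) * (quad_ham N (D u) * U u)) / 2^N)
          \<le> (\<Sum>p\<in>I. \<Sum>q\<in>I. \<bar>D u p q\<bar> / 4 * cmod (coef N U (sg p q T) u))"
        unfolding I_def by (rule coef_bound) (use T Uc[OF u] in \<open>auto simp: I_def\<close>)
      also have "\<dots> \<le> (\<Sum>p\<in>I. \<Sum>q\<in>I. \<alpha> (p, q) * cmod (coef N U (sg p q T) u))"
      proof (intro sum_mono mult_right_mono)
        fix p q assume "p \<in> I" "q \<in> I"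
        then show "\<bar>D u p q\<bar> / 4 \<le> \<alpha> (p, q)"
          using decay[OF u, of p q] unfolding \<alpha>_def lam_def I_def by simp
      qed simp
      also have "\<dots> = (\<Sum>k\<in>I \<times> I. \<alpha> k * cmod (coef N U (sg (fst k) (snd k) T) u))"
        by (auto simp: sum.cartesian_product intro!: sum.cong)
      finally show ?thesis .
    qed
    show "(\<Sum>k\<in>I \<times> I. \<alpha> k * (w T / w (sg (fst k) (snd k) T))) \<le> K"
      if T: "T \<in> {T. T \<subseteq> I}" for T
    proof -
      have TI: "T \<subseteq> {1..2*N}" using T unfolding I_def by simp
      have fT: "finite T" using TI finite_subset by blast
      have tb: "\<alpha> (p, q) * (w T / w (sg p q T)) \<le> (sqrt \<epsilon> * (c * r^2) / 4) * mu ^ (nat \<bar>int p - int q\<bar>) / mu^3"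
        if p: "p \<in> I" and q: "q \<in> I" for p q
      proof -
        have pI: "p \<in> {1..2*N}" and qI: "q \<in> {1..2*N}" using p q unfolding I_def by auto
        have sgI: "sg p q T \<subseteq> {1..2*N}" by (rule sg_sub[OF TI pI qI])
        have n: "card (sg p q T) \<le> card T + 2"
          using sg_card[of "sg p q T" p q] sgI finite_subset[OF sgI] by (simp add: sg_invol)
        have qq: "qubit_weight N (majorana_monomial N (sg p q T)) \<le> qubit_weight N (majorana_monomial N T) + gq p q"
          using weight_step[OF sgI pI qI] by (simp add: sg_invol)
        have "\<alpha> (p, q) * (w T / w (sg p q T))
            = ((c * r^2) * \<epsilon> * (mu^2) ^ (nat \<bar>int p - int q\<bar>) / 4) *
              ((\<epsilon> powr (real (card T) / 4) * (mu^2) ^ qubit_weight N (majorana_monomial N T)) /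
               (\<epsilon> powr (real (card (sg p q T)) / 4) * (mu^2) ^ qubit_weight N (majorana_monomial N (sg p q T))))"
          unfolding \<alpha>_def w_def mu(3) by (simp add: mult_ac)
        also have "\<dots> \<le> (sqrt \<epsilon> * (c * r^2) / 4) * mu ^ (nat \<bar>int p - int q\<bar>) / mu^3"
          by (rule term_bound[OF eps(1) _ mu(1) _ _ n qq gq_bound]) (use eps mu c in auto)
        finally show ?thesis .
      qed
      have "(\<Sum>k\<in>I \<times> I. \<alpha> k * (w T / w (sg (fst k) (snd k) T)))
          = (\<Sum>p\<in>I. \<Sum>q\<in>I. \<alpha> (p, q) * (w T / w (sg p q T)))"
        by (auto simp: sum.cartesian_product intro!: sum.cong)
      also have "\<dots> \<le> (\<Sum>p\<in>I. \<Sum>q\<in>I. (sqrt \<epsilon> * (c * r^2) / 4) * mu ^ (nat \<bar>int p - int q\<bar>) / mu^3)"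
        by (intro sum_mono tb)
      also have "\<dots> = (sqrt \<epsilon> * (c * r^2) / 4) / mu^3 * (\<Sum>p\<in>I. \<Sum>q\<in>I. mu ^ (nat \<bar>int p - int q\<bar>))"
        by (simp add: sum_distrib_left)
      also have "\<dots> \<le> (sqrt \<epsilon> * (c * r^2) / 4) / mu^3 * (\<Sum>p\<in>I. 2 / (1 - mu))"
        unfolding I_def
        by (intro mult_left_mono sum_mono geom_row) (use mu eps c in auto)
      also have "\<dots> = (sqrt \<epsilon> * (c * r^2) / 4) / mu^3 * (2 * real N * (2 / (1 - mu)))"
        unfolding I_def by simp
      also have "\<dots> = (sqrt \<epsilon> * c * r^2 * real N / (1 - mu)) * (1 / mu^3)"
        using mu by (simp add: field_simps)
      also have "\<dots> \<le> (sqrt \<epsilon> * c * r^2 * real N / (1 - mu)) * 3"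
      proof (rule mult_left_mono)
        show "1 / mu^3 \<le> 3" using mu3 mu by (simp add: field_simps)
        show "0 \<le> sqrt \<epsilon> * c * r^2 * real N / (1 - mu)" using eps c mu by simp
      qed
      also have "\<dots> = K" unfolding K_def mu_def by (simp add: field_simps)
      finally show ?thesis .
    qed
  qed
  have init: "(\<Sum>T\<in>{T. T \<subseteq> I}. cmod (coef N U T 0) / w T) = 1"
  proof -
    have U0: "U 0 = 1\<^sub>m (2^N)" using U unfolding solves_tord_exp_def by simp
    have c0: "coef N U T 0 = cnj (mat_trace (majorana_monomial N T)) / 2^N" for T
      using Uc[of 0] by (simp add: coef_eq expansion_coeff_def U0 adj_trace[OF mono_carrier])
    have z: "cmod (coef N U T 0) / w T = 0" if "T \<in> {T. T \<subseteq> I} - {{}}" for T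
      using that mono_trace_zero[of T N] unfolding c0 I_def by auto
    have e: "cmod (coef N U {} 0) / w {} = 1"
      unfolding c0 w_def using eps by (simp add: mono_empty mat_trace_def qw_one norm_divide norm_power)
    have "(\<Sum>T\<in>{T. T \<subseteq> I}. cmod (coef N U T 0) / w T)
        = cmod (coef N U {} 0) / w {} + (\<Sum>T\<in>{T. T \<subseteq> I} - {{}}. cmod (coef N U T 0) / w T)"
      by (rule sum.remove) (auto simp: I_def)
    also have "\<dots> = 1"
    proof -
      have "(\<Sum>T\<in>{T. T \<subseteq> I} - {{}}. cmod (coef N U T 0) / w T) = 0"
        by (rule sum.neutral) (use z in blast)
      then show ?thesis using e by (simp only: add_0_right)
    qed
    finally show ?thesis .
  qed
  have "cmod (expansion_coeff N (majorana_monomial N S) (U 1)) = cmod (coef N U S 1)"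
    using coef_eq[of U 1 N S] Uc[of 1] by simp
  also have "\<dots> \<le> w S * exp K" using main init by simp
  finally show "cmod (expansion_coeff N (majorana_monomial N S) (U 1))
             \<le> \<epsilon> powr (real (fermionic_weight S) / 4)
                * ((2/3) powr (1 / (4*r))) ^ qubit_weight N (majorana_monomial N S)
                * exp (3 * sqrt \<epsilon> * c * r^2 / (1 - sqrt ((2/3) powr (1 / (4*r)))) * real N)"
    unfolding w_def K_def lam_def fermionic_weight_def .
qed

end
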